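(* Let $R$ be a finite Frobenius ring and let $\psi$ be a primitive additive character of $R$. Let $a,b\in R$. For each principal ideal $D$ of $R$ with $(a)\subseteq D$ and $(b)\subseteq D$, choose a generator $d$ of $D$ and elements $a_0,b_0\in R$ with $a=da_0$, $b=db_0$, and define $$T_D=\sum_{v\in (R/d^\perp)^\times}\psi\big(d\tilde v\big)\,\psi\big(d\,a_0b_0\,\tilde v^{-1}\big)$$ if $d\neq 0$, where $\tilde v\in R^\times$ is any lift of $v$ (so the summand is $K(d.\psi,(a_0b_0).(d.\psi))$ computed over the quotient ring $R/d^\perp$, on which $d.\psi$ is a well-defined primitive character), and $T_D=1$ if $D=(0)$ (this case only occurs when $a=b=0$; it corresponds to the Kloosterman sum over the zero ring). Then $T_D$ and $|d^\perp|$ do not depend on the choices made, and $$\sum_{u\in R^\times}\psi(au+bu^{-1})=\sum_{\substack{D=(d)\text{ principal}\\ (a),(b)\subseteq D}} |d^\perp|\;T_D .$$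
   Context: All rings are finite and commutative with identity; $R^\times$ denotes the unit group. An additive character of $R$ is a group homomorphism $(R,+)\to\mathbb{C}^*$; for $c\in R$ and an additive character $\psi$, $c.\psi$ denotes the character $r\mapsto\psi(cr)$. The conductor of an additive character is the largest ideal on which it is identically $1$; a character is primitive if its conductor is the zero ideal. $R$ is called Frobenius if it admits a primitive additive character. For an ideal $I$ (or element $d$), $I^\perp=\{r\in R: rx=0\ \forall x\in I\}$ and $d^\perp=(d)^\perp$. For additive characters $\phi,\psi$ of a finite ring $S$, the Kloosterman sum is $K(\phi,\psi)=\sum_{u\in S^\times}\phi(u)\psi(u^{-1})$. *)

theory Defs
  imports Complex_Main
begin

definition ring_units :: "'a::comm_ring_1 set" where
  "ring_units = {u. \<exists>v. u * v = 1}"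

definition uinv :: "'a::comm_ring_1 \<Rightarrow> 'a" where
  "uinv u = (SOME v. u * v = 1)"

definition add_char :: "('a::comm_ring_1 \<Rightarrow> complex) \<Rightarrow> bool" where
  "add_char \<psi> \<longleftrightarrow> (\<forall>x y. \<psi> (x + y) = \<psi> x * \<psi> y) \<and> (\<forall>x. \<psi> x \<noteq> 0)"

definition is_ideal :: "'a::comm_ring_1 set \<Rightarrow> bool" where
  "is_ideal I \<longleftrightarrow> 0 \<in> I \<and> (\<forall>x\<in>I. \<forall>y\<in>I. x + y \<in> I) \<and> (\<forall>r. \<forall>x\<in>I. r * x \<in> I)"

definition conductor :: "('a::comm_ring_1 \<Rightarrow> complex) \<Rightarrow> 'a set" where
  "conductor \<psi> = \<Union>{I. is_ideal I \<and> (\<forall>x\<in>I. \<psi> x = 1)}"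

definition primitive_char :: "('a::comm_ring_1 \<Rightarrow> complex) \<Rightarrow> bool" where
  "primitive_char \<psi> \<longleftrightarrow> add_char \<psi> \<and> conductor \<psi> = {0}"

definition frobenius_ring :: "'a::{comm_ring_1,finite} itself \<Rightarrow> bool" where
  "frobenius_ring _ \<longleftrightarrow> (\<exists>\<psi> :: 'a \<Rightarrow> complex. primitive_char \<psi>)"

definition pideal :: "'a::comm_ring_1 \<Rightarrow> 'a set" where
  "pideal d = {d * r | r. True}"

definition perp :: "'a::comm_ring_1 set \<Rightarrow> 'a set" where
  "perp I = {r. \<forall>x\<in>I. r * x = 0}"

definition coset :: "'a::comm_ring_1 set \<Rightarrow> 'a \<Rightarrow> 'a set" where
  "coset I x = {y. x - y \<in> I}"

definition quot_units :: "'a::comm_ring_1 set \<Rightarrow> 'a set set" where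
  "quot_units I = {coset I x | x. \<exists>y. x * y - 1 \<in> I}"

definition unit_lift :: "'a::comm_ring_1 set \<Rightarrow> 'a" where
  "unit_lift C = (SOME u. u \<in> C \<and> u \<in> ring_units)"

text \<open>The term T_D, for a generator d of D and a = d a0, b = d b0.\<close>
definition T_term :: "('a::comm_ring_1 \<Rightarrow> complex) \<Rightarrow> 'a \<Rightarrow> 'a \<Rightarrow> 'a \<Rightarrow> complex" where
  "T_term \<psi> d a0 b0 =
     (if d = 0 then 1
      else (\<Sum>C\<in>quot_units (perp (pideal d)).
              \<psi> (d * unit_lift C) * \<psi> (d * (a0 * b0) * uinv (unit_lift C))))"

definition div_ideals :: "'a::comm_ring_1 \<Rightarrow> 'a \<Rightarrow> 'a set set" where
  "div_ideals a b = {D. (\<exists>d. D = pideal d) \<and> pideal a \<subseteq> D \<and> pideal b \<subseteq> D}"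

end

theory Submission
  imports Defs
begin


lemma idem_pow: "\<exists>M. (x::'a::{comm_ring_1,finite})^(Suc M) * x^(Suc M) = x^(Suc M)"
proof -
  have "\<not> inj (\<lambda>n::nat. x^n)"
  proof
    assume "inj (\<lambda>n::nat. x^n)"
    hence "finite (UNIV::nat set)"
      using finite_imageD[of "\<lambda>n::nat. x^n" UNIV] by (simp add: inj_on_def)
    thus False by simp
  qed
  then obtain i j where ij: "i \<noteq> j" "x^i = x^j" unfolding inj_def by blast
  then obtain i j where ij: "i < j" "x^i = x^j"
    by (metis linorder_neqE_nat)
  define p where "p = j - i"
  have p1: "p \<ge> 1" using ij p_def by simp
  have step: "x^(k+p) = x^k" if "k \<ge> i" for k
  proof -
    have "x^(k+p) = x^(k-i) * x^(i+p)" using that by (simp add: power_add[symmetric])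
    also have "i + p = j" using ij p_def by simp
    also have "x^(k-i) * x^j = x^(k-i) * x^i" using ij by simp
    also have "\<dots> = x^k" using that by (simp add: power_add[symmetric])
    finally show ?thesis .
  qed
  have per: "x^(k + m*p) = x^k" if "k \<ge> i" for k m
  proof (induction m)
    case 0 then show ?case by simp
  next
    case (Suc m)
    have "x^(k + Suc m * p) = x^((k + m*p) + p)" by (simp add: algebra_simps)
    also have "\<dots> = x^(k + m*p)" using step[of "k+m*p"] that by simp
    finally show ?case using Suc by simp
  qed
  define N where "N = p * Suc i"
  have N1: "N \<ge> Suc i" using p1 N_def mult_le_mono1[of 1 p "Suc i"] by simp
  have "x^N * x^N = x^(N + Suc i * p)" by (simp add: N_def power_add[symmetric] algebra_simps)
  also have "\<dots> = x^N" using per[of N "Suc i"] N1 by simp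
  finally have "x^N * x^N = x^N" .
  moreover have "N = Suc (N - 1)" using N1 by simp
  ultimately show ?thesis by metis
qed

lemma exist_unit:
  fixes d x y :: "'a::{comm_ring_1,finite}"
  assumes "d*(x*y-1) = 0"
  shows "\<exists>u. d*u = d*x \<and> u \<in> ring_units"
proof -
  obtain M where M: "x^(Suc M) * x^(Suc M) = x^(Suc M)" using idem_pow by blast
  define e where "e = x^(Suc M)"
  have ee: "e*e = e" using M e_def by simp
  have ex: "e = x * x^M" using e_def by simp
  have dxy: "d*(x*y) = d" using assms by (simp add: algebra_simps)
  have dk: "d*(x*y)^k = d" for k
    by (induction k) (simp_all add: dxy mult.assoc[symmetric], metis dxy mult.assoc mult.commute)
  have "d = d*e*y^(Suc M)" using dk[of "Suc M"] e_def by (simp add: power_mult_distrib algebra_simps)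
  hence d1e: "d*(1-e) = 0"
    by (metis ee diff_self mult.assoc mult.commute right_diff_distrib mult_1_right)
  define u where "u = x*e + (1-e)"
  define v where "v = x^M*e + (1-e)"
  have uv: "u*v = (x*x^M)*(e*e) + (x + x^M)*(e*(1-e)) + (1-e)*(1-e)"
    by (simp add: u_def v_def algebra_simps)
  have e1: "e*(1-e) = 0" using ee by (simp add: algebra_simps)
  have e2: "(1-e)*(1-e) = 1 - e" using ee by (simp add: algebra_simps)
  have "u*v = 1" using uv e1 e2 ee ex[symmetric] by simp
  hence "u \<in> ring_units" unfolding ring_units_def by blast
  moreover have "d*u = d*x"
  proof -
    have "d*u = x*e*d + d*(1-e)" unfolding u_def by (simp add: algebra_simps)
    also have "\<dots> = x*e*d" using d1e by simp
    also have "x*d*(1-e) = 0" using d1e by (simp add: mult.assoc)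
    hence "x*e*d = d*x" by (simp add: algebra_simps)
    finally show ?thesis .
  qed
  ultimately show ?thesis by blast
qed




definition Fk :: "('a::comm_ring_1 \<Rightarrow> complex) \<Rightarrow> 'a \<Rightarrow> 'a \<Rightarrow> 'a \<Rightarrow> complex" where
  "Fk \<psi> a b e = \<psi> e * \<psi> (a * (SOME \<beta>. b = e*\<beta>))"

lemma pideal_mem: "x \<in> pideal d \<longleftrightarrow> (\<exists>r. x = d*r)"
  unfolding pideal_def by blast

lemma perp_pideal: "r \<in> perp (pideal d) \<longleftrightarrow> r*d = 0"
proof
  assume "r \<in> perp (pideal d)"
  hence "r*(d*1) = 0" unfolding perp_def pideal_def by blast
  thus "r*d = 0" by simp
next
  assume h: "r*d = 0"
  show "r \<in> perp (pideal d)" unfolding perp_def pideal_def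
  proof (safe)
    fix s show "r*(d*s) = 0" using h by (simp add: mult.assoc[symmetric])
  qed
qed

lemma ideal_perp: "is_ideal (perp I)"
  unfolding is_ideal_def perp_def by (simp add: distrib_right mult.assoc)

lemma ideal_pideal: "is_ideal (pideal d)"
  unfolding is_ideal_def
proof (intro conjI ballI allI)
  show "0 \<in> pideal d" unfolding pideal_mem by (rule exI[of _ 0]) simp
next
  fix x y assume "x \<in> pideal d" "y \<in> pideal d"
  then obtain r s where "x = d*r" "y = d*s" unfolding pideal_mem by blast
  thus "x + y \<in> pideal d" unfolding pideal_mem by (intro exI[of _ "r+s"]) (simp add: distrib_left)
next
  fix t x assume "x \<in> pideal d"
  then obtain r where "x = d*r" unfolding pideal_mem by blast
  thus "t*x \<in> pideal d" unfolding pideal_mem by (intro exI[of _ "t*r"]) (simp add: mult.left_commute)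
qed

lemma ideal_UNIV: "is_ideal UNIV" unfolding is_ideal_def by simp

lemma units_inv: "u \<in> ring_units \<Longrightarrow> u * uinv u = 1"
  unfolding ring_units_def uinv_def by (rule someI_ex) blast

lemma one_pideal: "1 \<in> pideal x \<longleftrightarrow> x \<in> ring_units"
  unfolding pideal_mem ring_units_def
proof
  assume "\<exists>r. 1 = x*r" then obtain r where "1 = x*r" by blast
  thus "x \<in> {u. \<exists>v. u*v = 1}" by auto
next
  assume "x \<in> {u. \<exists>v. u*v = 1}" then obtain r where "x*r = 1" by blast
  thus "\<exists>r. 1 = x*r" by (intro exI[of _ r]) simp
qed

lemma perp_unit:
  assumes "x \<in> ring_units" shows "perp (pideal x) = {0}"
proof -
  have "r = 0" if "r*x = 0" for r
  proof -
    have "r = r*(x*uinv x)" using units_inv[OF assms] by simp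
    also have "\<dots> = 0" using that by (simp add: mult.assoc[symmetric])
    finally show ?thesis .
  qed
  thus ?thesis by (auto simp: perp_pideal)
qed




context
  fixes \<psi> :: "'a::{comm_ring_1,finite} \<Rightarrow> complex"
  assumes prim: "primitive_char \<psi>"
begin

lemma psi_add: "\<psi> (x+y) = \<psi> x * \<psi> y"
  using prim unfolding primitive_char_def add_char_def by blast

lemma psi_nz: "\<psi> x \<noteq> 0"
  using prim unfolding primitive_char_def add_char_def by blast

lemma psi0: "\<psi> 0 = 1"
proof -
  have "\<psi> 0 * \<psi> 0 = \<psi> 0 * 1" using psi_add[of 0 0] by simp
  thus ?thesis using psi_nz[of 0] by (metis mult_left_cancel)
qed

lemma cond_zero: "is_ideal K \<Longrightarrow> \<forall>x\<in>K. \<psi> x = 1 \<Longrightarrow> x \<in> K \<Longrightarrow> x = 0"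
  using prim unfolding primitive_char_def conductor_def by blast

lemma sum_ideal:
  assumes I: "is_ideal (I::'a set)"
  shows "(\<Sum>t\<in>I. \<psi> (r*t)) = (if \<forall>t\<in>I. r*t = 0 then of_nat (card I) else 0)"
proof (cases "\<forall>t\<in>I. r*t = 0")
  case True
  then show ?thesis by (simp add: psi0)
next
  case False
  then obtain t0 where t0: "t0 \<in> I" "r*t0 \<noteq> 0" by blast
  define K where "K = {r*t | t. t \<in> I}"
  have K: "is_ideal K" using I unfolding is_ideal_def K_def
    by (auto, metis mult_zero_right, metis distrib_left, metis mult.left_commute)
  have "\<not> (\<forall>x\<in>K. \<psi> x = 1)"
    using cond_zero[OF K] t0 unfolding K_def by blast
  then obtain s where s: "s \<in> I" "\<psi> (r*s) \<noteq> 1" unfolding K_def by blast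
  have ms: "t - s \<in> I" if "t \<in> I" for t
  proof -
    have "(-1)*s \<in> I" using I s unfolding is_ideal_def by blast
    hence "t + (-1)*s \<in> I" using I that unfolding is_ideal_def by blast
    thus ?thesis by simp
  qed
  have ps: "t + s \<in> I" if "t \<in> I" for t using I that s unfolding is_ideal_def by blast
  have "(\<Sum>t\<in>I. \<psi> (r*(t+s))) = (\<Sum>t\<in>I. \<psi> (r*t))"
    by (rule sum.reindex_bij_witness[of _ "\<lambda>t. t - s" "\<lambda>t. t + s"]) (auto simp: ms ps)
  moreover have "(\<Sum>t\<in>I. \<psi> (r*(t+s))) = \<psi> (r*s) * (\<Sum>t\<in>I. \<psi> (r*t))"
    by (simp add: sum_distrib_left distrib_left psi_add mult.commute)
  ultimately have "(1 - \<psi> (r*s)) * (\<Sum>t\<in>I. \<psi> (r*t)) = 0" by (simp add: algebra_simps)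
  hence z: "(\<Sum>t\<in>I. \<psi> (r*t)) = 0" using s by simp
  show ?thesis by (subst if_not_P[OF False]) (rule z)
qed

lemma card_perp:
  assumes I: "is_ideal (I::'a set)"
  shows "card I * card (perp I) = card (UNIV::'a set)"
proof -
  have "(\<Sum>r\<in>UNIV. \<Sum>x\<in>I. \<psi> (r*x)) = (\<Sum>r\<in>UNIV. if r \<in> perp I then of_nat (card I) else 0)"
    by (rule sum.cong, simp, subst sum_ideal[OF I], simp add: perp_def)
  also have "\<dots> = of_nat (card I) * of_nat (card (perp I))"
    by (simp add: sum.If_cases)
  finally have 1: "(\<Sum>r\<in>UNIV. \<Sum>x\<in>I. \<psi> (r*x)) = of_nat (card I * card (perp I))" by simp
  have "(\<Sum>r\<in>UNIV. \<Sum>x\<in>I. \<psi> (r*x)) = (\<Sum>x\<in>I. \<Sum>r\<in>UNIV. \<psi> (x*r))"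
    by (subst sum.swap) (simp add: mult.commute)
  also have "\<dots> = (\<Sum>x\<in>I. if x = 0 then of_nat (card (UNIV::'a set)) else 0)"
  proof (rule sum.cong, simp)
    fix x assume "x \<in> I"
    have "(\<forall>t\<in>UNIV. x*t = 0) \<longleftrightarrow> x = 0" by (auto, metis mult_1_right)
    thus "(\<Sum>r\<in>UNIV. \<psi> (x*r)) = (if x = 0 then of_nat (card (UNIV::'a set)) else 0)"
      using sum_ideal[OF ideal_UNIV, of x] by simp
  qed
  also have "\<dots> = of_nat (card (UNIV::'a set))"
    using I unfolding is_ideal_def by (simp add: sum.delta)
  finally show ?thesis using 1 by (metis of_nat_eq_iff)
qed

lemma double_perp: "perp (perp (pideal z)) = pideal (z::'a)"
proof -
  define J where "J = perp (pideal z)"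
  have sub: "pideal z \<subseteq> perp J"
    unfolding J_def by (auto simp: perp_def pideal_def perp_pideal, metis mult.commute mult.left_commute mult_zero_right)
  have c1: "card (pideal z) * card J = card (UNIV::'a set)" using card_perp[OF ideal_pideal] J_def by simp
  have c2: "card J * card (perp J) = card (UNIV::'a set)" unfolding J_def using card_perp[OF ideal_perp[of "pideal z"]] by simp
  have "0 \<in> J" using ideal_perp J_def unfolding is_ideal_def by blast
  hence "card J > 0" by (auto simp add: card_gt_0_iff)
  hence "card (perp J) = card (pideal z)" using c1 c2 by (metis mult.commute mult_left_cancel neq0_conv)
  hence "pideal z = perp J" using sub by (metis card_subset_eq finite)
  thus ?thesis using J_def by simp
qed

lemma sumM:
  assumes "z*\<beta> = (c::'a)"
  shows "(\<Sum>x\<in>{x. z*x = c}. \<psi> (r*x)) =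
         (if r \<in> pideal z then of_nat (card (perp (pideal z))) * \<psi> (r*\<beta>) else 0)"
proof -
  define J where "J = perp (pideal z)"
  have "(\<Sum>x\<in>{x. z*x = c}. \<psi> (r*x)) = (\<Sum>t\<in>J. \<psi> (r*(\<beta>+t)))"
  proof (rule sum.reindex_bij_witness[of _ "\<lambda>t. \<beta> + t" "\<lambda>x. x - \<beta>"])
    fix a assume "a \<in> {x. z*x = c}"
    thus "a - \<beta> \<in> J" using assms by (simp add: J_def perp_pideal algebra_simps)
  next
    fix b assume "b \<in> J"
    thus "\<beta> + b \<in> {x. z*x = c}" using assms by (simp add: J_def perp_pideal algebra_simps)
  qed auto
  also have "\<dots> = \<psi> (r*\<beta>) * (\<Sum>t\<in>J. \<psi> (r*t))"
    by (simp add: sum_distrib_left distrib_left psi_add)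
  also have "(\<Sum>t\<in>J. \<psi> (r*t)) = (if r \<in> pideal z then of_nat (card J) else 0)"
  proof -
    have "(\<forall>t\<in>J. r*t = 0) \<longleftrightarrow> r \<in> perp J" by (simp add: perp_def)
    also have "\<dots> \<longleftrightarrow> r \<in> pideal z" using double_perp J_def by simp
    finally show ?thesis using sum_ideal[OF ideal_perp[of "pideal z"], of r] J_def by simp
  qed
  finally show ?thesis using J_def by simp
qed

end



lemma coset_mem: "y \<in> coset (perp (pideal d)) x \<longleftrightarrow> d*x = d*y"
proof -
  have "(x-y)*d = d*x - d*y" by (simp add: algebra_simps)
  thus ?thesis unfolding coset_def by (simp add: perp_pideal)
qed

lemma coset_eq: "d*x = d*x' \<Longrightarrow> coset (perp (pideal d)) x = coset (perp (pideal d)) x'"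
  by (auto simp: coset_mem)

lemma lift_prop:
  fixes d :: "'a::{comm_ring_1,finite}"
  assumes "C \<in> quot_units (perp (pideal d))"
  shows "unit_lift C \<in> C \<and> unit_lift C \<in> ring_units"
proof -
  obtain x y where C: "C = coset (perp (pideal d)) x" "x*y - 1 \<in> perp (pideal d)"
    using assms unfolding quot_units_def by blast
  have "d*(x*y-1) = 0" using C(2) by (simp add: perp_pideal mult.commute)
  then obtain u where u: "d*u = d*x" "u \<in> ring_units" using exist_unit by blast
  have "u \<in> C" using u C(1) by (simp add: coset_mem)
  hence "\<exists>u. u \<in> C \<and> u \<in> ring_units" using u by blast
  thus ?thesis unfolding unit_lift_def by (rule someI_ex)
qed

lemma unit_pideal: "u \<in> ring_units \<Longrightarrow> pideal (d*u) = pideal d"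
proof -
  assume u: "u \<in> ring_units"
  have 1: "u * uinv u = 1" using units_inv[OF u] .
  show ?thesis unfolding pideal_mem set_eq_iff
  proof (intro allI iffI)
    fix x assume "\<exists>r. x = d*u*r"
    then obtain r where "x = d*u*r" by blast
    thus "\<exists>r. x = d*r" by (intro exI[of _ "u*r"]) (simp add: mult.assoc)
  next
    fix x assume "\<exists>r. x = d*r"
    then obtain r where "x = d*r" by blast
    have "d*u*(uinv u * r) = d*(u*uinv u)*r" by (simp add: mult.assoc)
    hence "x = d*u*(uinv u * r)" using 1 \<open>x = d*r\<close> by simp
    thus "\<exists>r. x = d*u*r" by blast
  qed
qed

lemma pideal_sub: "a \<in> pideal e \<longleftrightarrow> pideal a \<subseteq> pideal e"
proof
  assume "a \<in> pideal e"
  then obtain r where "a = e*r" unfolding pideal_mem by blast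
  show "pideal a \<subseteq> pideal e"
  proof
    fix x assume "x \<in> pideal a"
    then obtain s where "x = a*s" unfolding pideal_mem by blast
    hence "x = e*(r*s)" using \<open>a = e*r\<close> by (simp add: mult.assoc)
    thus "x \<in> pideal e" unfolding pideal_mem by blast
  qed
next
  assume "pideal a \<subseteq> pideal e"
  moreover have "a \<in> pideal a" unfolding pideal_mem by (intro exI[of _ 1]) simp
  ultimately show "a \<in> pideal e" by blast
qed

lemma pideal_zero: "pideal e = pideal 0 \<longleftrightarrow> e = 0"
proof
  assume h: "pideal e = pideal 0"
  have "e \<in> pideal e" unfolding pideal_mem by (intro exI[of _ 1]) simp
  hence "e \<in> pideal 0" using h by simp
  thus "e = 0" unfolding pideal_mem by auto
qed simp

context
  fixes \<psi> :: "'a::{comm_ring_1,finite} \<Rightarrow> complex"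
  assumes prim: "primitive_char \<psi>"
begin

lemma Fk_unit:
  assumes u: "u \<in> ring_units" and a: "a = d*a0" and b: "b = d*b0"
  shows "Fk \<psi> a b (d*u) = \<psi> (d*u) * \<psi> (d*(a0*b0)*uinv u)"
proof -
  have 1: "u * uinv u = 1" using units_inv[OF u] .
  have "(d*u)*(uinv u * b0) = d*(u*uinv u)*b0" by (simp add: mult.assoc)
  hence "b = (d*u)*(uinv u * b0)" using b 1 by simp
  hence ex: "\<exists>\<beta>. b = (d*u)*\<beta>" by blast
  define \<beta> where "\<beta> = (SOME \<beta>. b = (d*u)*\<beta>)"
  have \<beta>: "b = d*u*\<beta>" unfolding \<beta>_def by (rule someI_ex[OF ex])
  have "d*(a0*b0)*uinv u = a0*(d*b0)*uinv u" by (simp add: ac_simps)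
  also have "\<dots> = a0*(d*u*\<beta>)*uinv u" using b \<beta> by simp
  also have "\<dots> = (a0*d)*\<beta>*(u*uinv u)" by (simp add: ac_simps)
  also have "\<dots> = a*\<beta>" using 1 a by (simp add: ac_simps)
  finally show ?thesis unfolding Fk_def \<beta>_def by simp
qed

lemma T_eq:
  assumes a: "a = d*a0" and b: "b = d*b0"
  shows "T_term \<psi> d a0 b0 = (\<Sum>e\<in>{e. pideal e = pideal d}. Fk \<psi> a b e)"
proof (cases "d = 0")
  case True
  have "{e. pideal e = pideal d} = {0}" using True pideal_zero by auto
  moreover have "Fk \<psi> a b 0 = 1" using a True psi0[OF prim] by (simp add: Fk_def)
  ultimately show ?thesis using True by (simp add: T_term_def)
next
  case False
  define I where "I = perp (pideal d)"
  have "(\<Sum>C\<in>quot_units I. \<psi> (d * unit_lift C) * \<psi> (d * (a0 * b0) * uinv (unit_lift C)))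
        = (\<Sum>e\<in>{e. pideal e = pideal d}. Fk \<psi> a b e)"
  proof (rule sum.reindex_bij_witness[where i="\<lambda>e. coset I (SOME x. e = d*x)" and j="\<lambda>C. d*unit_lift C"])
    fix C assume C: "C \<in> quot_units I"
    have L: "unit_lift C \<in> C" "unit_lift C \<in> ring_units" using lift_prop[of C d] C unfolding I_def by blast+
    obtain x where x: "C = coset I x" using C unfolding quot_units_def by blast
    have ex: "\<exists>x'. d*unit_lift C = d*x'" by blast
    define s where "s = (SOME x'. d*unit_lift C = d*x')"
    have "d*unit_lift C = d*s" unfolding s_def using someI_ex[OF ex] .
    moreover have "d*x = d*unit_lift C" using L(1) x unfolding I_def by (simp add: coset_mem)
    ultimately have "d*s = d*x" by simp
    hence "coset (perp (pideal d)) s = coset (perp (pideal d)) x" by (rule coset_eq)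
    thus "coset I (SOME x. d*unit_lift C = d*x) = C"
      using x unfolding I_def s_def by simp
    show "d*unit_lift C \<in> {e. pideal e = pideal d}" using L(2) unit_pideal by simp
    show "Fk \<psi> a b (d * unit_lift C) = \<psi> (d * unit_lift C) * \<psi> (d * (a0 * b0) * uinv (unit_lift C))"
      by (rule Fk_unit[OF L(2) a b])
  next
    fix e assume e: "e \<in> {e. pideal e = pideal d}"
    have "e \<in> pideal d" using e pideal_sub by blast
    hence ex: "\<exists>x. e = d*x" by (simp add: pideal_mem)
    define x where "x = (SOME x. e = d*x)"
    have ex': "e = d*x" using someI_ex[OF ex] x_def by simp
    have "d \<in> pideal e" using e pideal_sub by blast
    then obtain y where y: "d = e*y" unfolding pideal_mem by blast
    have "(x*y - 1)*d = 0" using y ex' by (simp add: algebra_simps)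
    hence "x*y - 1 \<in> I" using I_def by (simp add: perp_pideal)
    hence Q: "coset I x \<in> quot_units I" unfolding quot_units_def by blast
    thus "coset I (SOME x. e = d*x) \<in> quot_units I" using x_def by simp
    have "unit_lift (coset I x) \<in> coset I x" using lift_prop[of "coset I x" d] Q unfolding I_def by blast
    hence "d*unit_lift (coset I x) = d*x" using I_def by (simp add: coset_mem)
    thus "d * unit_lift (coset I (SOME x. e = d*x)) = e" unfolding x_def[symmetric] using ex' by simp
  qed
  thus ?thesis using False I_def by (simp add: T_term_def)
qed

lemma way1:
  "(\<Sum>x\<in>UNIV. \<Sum>z\<in>{z. x*z = b}. \<psi> (a*x) * \<psi> z) = (\<Sum>u\<in>ring_units. \<psi> (a*u + b*uinv u))"
proof -
  have "(\<Sum>z\<in>{z. x*z = b}. \<psi> (a*x) * \<psi> z) = (if x \<in> ring_units then \<psi> (a*x + b*uinv x) else 0)" for x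
  proof -
    have 0: "(\<Sum>z\<in>{z. x*z = b}. \<psi> (a*x) * \<psi> z) = \<psi> (a*x) * (\<Sum>z\<in>{z. x*z = b}. \<psi> (1*z))"
      by (simp add: sum_distrib_left)
    show ?thesis
    proof (cases "x \<in> ring_units")
      case True
      have 1: "x * uinv x = 1" using units_inv[OF True] .
      have xb: "x*(uinv x*b) = b" using 1 by (simp add: mult.assoc[symmetric])
      have "(\<Sum>z\<in>{z. x*z = b}. \<psi> (1*z)) = \<psi> (uinv x * b)"
        using sumM[OF prim xb, of 1] True perp_unit[OF True] by (simp add: one_pideal)
      thus ?thesis using 0 True psi_add[OF prim] by (simp add: mult.commute)
    next
      case False
      show ?thesis
      proof (cases "\<exists>\<beta>. x*\<beta> = b")
        case True
        then obtain \<beta> where "x*\<beta> = b" by blast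
        thus ?thesis using 0 sumM[OF prim, of x \<beta> b 1] False by (simp add: one_pideal)
      next
        case F2: False
        hence "{z. x*z = b} = {}" by blast
        thus ?thesis using 0 False by simp
      qed
    qed
  qed
  hence "(\<Sum>x\<in>UNIV. \<Sum>z\<in>{z. x*z = b}. \<psi> (a*x) * \<psi> z) =
         (\<Sum>x\<in>UNIV. if x \<in> ring_units then \<psi> (a*x + b*uinv x) else 0)" by simp
  also have "\<dots> = (\<Sum>u\<in>ring_units. \<psi> (a*u + b*uinv u))"
    by (simp add: sum.If_cases)
  finally show ?thesis .
qed

lemma way2:
  "(\<Sum>z\<in>UNIV. \<Sum>x\<in>{x. x*z = b}. \<psi> (a*x) * \<psi> z) =
   (\<Sum>e\<in>{e. a \<in> pideal e \<and> b \<in> pideal e}. of_nat (card (perp (pideal e))) * Fk \<psi> a b e)"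
proof -
  have "(\<Sum>x\<in>{x. x*z = b}. \<psi> (a*x) * \<psi> z) =
        (if a \<in> pideal z \<and> b \<in> pideal z then of_nat (card (perp (pideal z))) * Fk \<psi> a b z else 0)" for z
  proof -
    have "{x. x*z = b} = {x. z*x = b}" by (simp add: mult.commute)
    hence 0: "(\<Sum>x\<in>{x. x*z = b}. \<psi> (a*x) * \<psi> z) = \<psi> z * (\<Sum>x\<in>{x. z*x = b}. \<psi> (a*x))"
      by (simp add: sum_distrib_left mult.commute)
    show ?thesis
    proof (cases "b \<in> pideal z")
      case True
      hence ex: "\<exists>\<beta>. b = z*\<beta>" by (simp add: pideal_mem)
      define \<beta> where "\<beta> = (SOME \<beta>. b = z*\<beta>)"
      have zb: "z*\<beta> = b" using someI_ex[OF ex] \<beta>_def by simp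
      show ?thesis using 0 sumM[OF prim zb, of a] True unfolding Fk_def \<beta>_def by simp
    next
      case False
      hence "{x. z*x = b} = {}" by (auto simp: pideal_mem)
      thus ?thesis using 0 False by simp
    qed
  qed
  hence "(\<Sum>z\<in>UNIV. \<Sum>x\<in>{x. x*z = b}. \<psi> (a*x) * \<psi> z) =
         (\<Sum>z\<in>UNIV. if a \<in> pideal z \<and> b \<in> pideal z then of_nat (card (perp (pideal z))) * Fk \<psi> a b z else 0)"
    by simp
  also have "\<dots> = (\<Sum>e\<in>{e. a \<in> pideal e \<and> b \<in> pideal e}. of_nat (card (perp (pideal e))) * Fk \<psi> a b e)"
    by (simp add: sum.If_cases)
  finally show ?thesis .
qed

lemma ksum_eq:
  "(\<Sum>u\<in>ring_units. \<psi> (a*u + b*uinv u)) =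
   (\<Sum>e\<in>{e. a \<in> pideal e \<and> b \<in> pideal e}. of_nat (card (perp (pideal e))) * Fk \<psi> a b e)"
proof -
  have "(\<Sum>x\<in>UNIV. \<Sum>z\<in>{z. x*z = b}. \<psi> (a*x) * \<psi> z) = (\<Sum>z\<in>UNIV. \<Sum>x\<in>{x. x*z = b}. \<psi> (a*x) * \<psi> z)"
    using sum.swap_restrict[of UNIV UNIV "\<lambda>x z. \<psi> (a*x) * \<psi> z" "\<lambda>x z. x*z = b"] by simp
  thus ?thesis using way1 way2 by simp
qed

end




theorem mainTheorem1:
  fixes \<psi> :: "'a::{comm_ring_1,finite} \<Rightarrow> complex" and a b :: 'a
  assumes "frobenius_ring TYPE('a)"
    and "primitive_char \<psi>"
  shows "(\<forall>D d d' a0 b0 a0' b0'.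
            D \<in> div_ideals a b \<and> D = pideal d \<and> D = pideal d' \<and>
            a = d * a0 \<and> b = d * b0 \<and> a = d' * a0' \<and> b = d' * b0' \<longrightarrow>
            T_term \<psi> d a0 b0 = T_term \<psi> d' a0' b0' \<and>
            card (perp (pideal d)) = card (perp (pideal d')))
       \<and> (\<forall>g a0 b0.
            (\<forall>D\<in>div_ideals a b. D = pideal (g D) \<and> a = g D * a0 D \<and> b = g D * b0 D) \<longrightarrow>
            (\<Sum>u\<in>ring_units. \<psi> (a * u + b * uinv u)) =
            (\<Sum>D\<in>div_ideals a b.
                of_nat (card (perp (pideal (g D)))) * T_term \<psi> (g D) (a0 D) (b0 D)))"
proof (intro conjI allI impI)
  note prim = assms(2)
  fix D d d' a0 b0 a0' b0'
  assume H: "D \<in> div_ideals a b \<and> D = pideal d \<and> D = pideal d' \<and>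
            a = d * a0 \<and> b = d * b0 \<and> a = d' * a0' \<and> b = d' * b0'"
  hence e: "pideal d = pideal d'" by (metis)
  show "T_term \<psi> d a0 b0 = T_term \<psi> d' a0' b0'"
  proof -
    have 1: "T_term \<psi> d a0 b0 = (\<Sum>e\<in>{e. pideal e = pideal d}. Fk \<psi> a b e)"
      using H by (intro T_eq[OF prim]) auto
    have 2: "T_term \<psi> d' a0' b0' = (\<Sum>e\<in>{e. pideal e = pideal d'}. Fk \<psi> a b e)"
      using H by (intro T_eq[OF prim]) auto
    show ?thesis unfolding 1 2 e ..
  qed
  show "card (perp (pideal d)) = card (perp (pideal d'))" using e by simp
next
  note prim = assms(2)
  fix g :: "'a set \<Rightarrow> 'a" and a0 b0 :: "'a set \<Rightarrow> 'a"
  assume H: "\<forall>D\<in>div_ideals a b. D = pideal (g D) \<and> a = g D * a0 D \<and> b = g D * b0 D"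
  define S where "S = {e. a \<in> pideal e \<and> b \<in> pideal e}"
  define h where "h = (\<lambda>e. of_nat (card (perp (pideal e))) * Fk \<psi> a b e)"
  have "(\<Sum>D\<in>div_ideals a b. of_nat (card (perp (pideal (g D)))) * T_term \<psi> (g D) (a0 D) (b0 D))
        = (\<Sum>D\<in>div_ideals a b. \<Sum>e\<in>{e \<in> S. pideal e = D}. h e)"
  proof (rule sum.cong, simp)
    fix D assume D: "D \<in> div_ideals a b"
    have gD: "D = pideal (g D)" "a = g D * a0 D" "b = g D * b0 D" using H D by auto
    have set: "{e. pideal e = D} = {e \<in> S. pideal e = D}"
      using D unfolding S_def div_ideals_def by (auto simp: pideal_sub)
    have "of_nat (card (perp (pideal (g D)))) * T_term \<psi> (g D) (a0 D) (b0 D)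
          = of_nat (card (perp D)) * (\<Sum>e\<in>{e. pideal e = D}. Fk \<psi> a b e)"
      using T_eq[OF prim gD(2) gD(3)] gD(1) by simp
    also have "\<dots> = (\<Sum>e\<in>{e. pideal e = D}. h e)"
      unfolding h_def sum_distrib_left by (rule sum.cong) auto
    finally show "of_nat (card (perp (pideal (g D)))) * T_term \<psi> (g D) (a0 D) (b0 D)
          = (\<Sum>e\<in>{e \<in> S. pideal e = D}. h e)" using set by simp
  qed
  also have "\<dots> = sum h S"
  proof (rule sum.group)
    show "finite S" by simp
    show "finite (div_ideals a b)" by simp
    show "pideal ` S \<subseteq> div_ideals a b"
      unfolding S_def div_ideals_def by (auto simp: pideal_sub)
  qed
  finally show "(\<Sum>u\<in>ring_units. \<psi> (a * u + b * uinv u)) =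
            (\<Sum>D\<in>div_ideals a b.
                of_nat (card (perp (pideal (g D)))) * T_term \<psi> (g D) (a0 D) (b0 D))"
    using ksum_eq[OF prim, of a b] unfolding S_def h_def by simp
qed


end
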